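(* For every $\mathsf{SKS}$ derivation $\Phi$ there exists a super-streamlined $\mathsf{SKS}$ derivation with the same premiss and the same conclusion as $\Phi$.
   Context: Formulae are built from the units $\mathsf f$ (false) and $\mathsf t$ (true), atoms $a,b,\dots$, disjunction $[\alpha\vee\beta]$ and conjunction $(\alpha\wedge\beta)$; on atoms there is an involution $a\mapsto\bar a$ with $\bar a\neq a$ (negation only applies to atoms). A context $\xi\{\ \}$ is a formula with a hole. An inference step of a rule $\alpha/\beta$ (premiss $\alpha$ above, conclusion $\beta$ below) rewrites $\xi\{\alpha\}$ into $\xi\{\beta\}$ for an arbitrary context $\xi$ (deep inference). A derivation from $\alpha$ (premiss) to $\beta$ (conclusion) is a finite chain of inference steps starting at $\alpha$ and ending at $\beta$; a proof is a derivation with premiss $\mathsf t$. System $\mathsf{SKS}$ consists of: interaction $\mathsf{ai}{\downarrow}$: $\mathsf t/[a\vee\bar a]$; weakening $\mathsf{aw}{\downarrow}$: $\mathsf f/a$; contraction $\mathsf{ac}{\downarrow}$: $[a\vee a]/a$; cointeraction or cut $\mathsf{ai}{\uparrow}$: $(a\wedge\bar a)/\mathsf f$; coweakening $\mathsf{aw}{\uparrow}$: $a/\mathsf t$; cocontraction $\mathsf{ac}{\uparrow}$: $a/(a\wedge a)$ (for every atom $a$); switch $(\alpha\wedge[\beta\vee\gamma])/[(\alpha\wedge\beta)\vee\gamma]$; medial $[(\alpha\wedge\beta)\vee(\gamma\wedge\delta)]/([\alpha\vee\gamma]\wedge[\beta\vee\delta])$; and the rule $\gamma/\delta$ whenever $\gamma=\delta$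 is (either direction of) an instance of: commutativity and associativity of $\vee$ and $\wedge$, $[\alpha\vee\mathsf f]=\alpha$, $(\alpha\wedge\mathsf t)=\alpha$, $[\mathsf t\vee\mathsf t]=\mathsf t$, $(\mathsf f\wedge\mathsf f)=\mathsf f$. An atomic flow is a tuple $(V,E,\eta,up,lo)$: finite sets $V$ (vertices) and $E$ (edges), a labelling $\eta$ of vertices by one of interaction ($\mathsf{ai}{\downarrow}$), cut ($\mathsf{ai}{\uparrow}$), weakening ($\mathsf{aw}{\downarrow}$), coweakening ($\mathsf{aw}{\uparrow}$), contraction ($\mathsf{ac}{\downarrow}$), cocontraction ($\mathsf{ac}{\uparrow}$), and maps $up:E\to V\cup\{\top\}$, $lo:E\to V\cup\{\bot\}$ ($\top,\bot\notin V$). The upper edges of a vertex $\nu$ are those $\epsilon$ with $lo(\epsilon)=\nu$, its lower edges those with $up(\epsilon)=\nu$. The (number of upper, number of lower) edges must be $(0,2)$ for interaction, $(2,0)$ for cut, $(0,1)$ for weakening, $(1,0)$ for coweakening, $(2,1)$ for contraction, $(1,2)$ for cocontraction; the directed graph has no directed cycle; and there is a map $\pi:E\to\{+,-\}$ such that all edges of each (co)contraction vertex get the same sign and the two edges of each interaction or cut vertex get different signs. Flows are considered up to isomorphism. The atomic flow associated with an $\mathsf{SKS}$ derivation $\Phi$ is obtained by tracing atom occurrences: each atom occurrence of $\Phi$ is mapped to an edge; in every inference step, occurrences in the context and (for switch, medial and $=$) in the subformulae instantiating $\alpha,\beta,\gamma,\delta$ are mapped to the same edges in the step's premiss and conclusion;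 each step of one of the six atomic (structural) rules gives a vertex labelled by that rule, whose upper edges are the atom occurrences of the redex in the step's premiss and whose lower edges are the atom occurrences of the redex in the step's conclusion; occurrences in the premiss of $\Phi$ are edges with $up=\top$ and those in the conclusion edges with $lo=\bot$. An $\mathsf{SKS}$ derivation is streamlined if in its associated atomic flow there is no directed path (sequence of edges $\epsilon_1,\dots,\epsilon_h$ with $lo(\epsilon_i)=up(\epsilon_{i+1})$) from an interaction or weakening vertex to a cut or coweakening vertex. It is super-streamlined if it is streamlined and its atomic flow is normal (no reduction applies) for the following weakening reductions on flows, each of which replaces a subgraph: (i) a weakening whose lower edge is an upper edge of a contraction: delete both and merge the contraction's other upper edge with its lower edge into one edge; (ii) dually, a coweakening whose upper edge is a lower edge of a cocontraction: delete both and merge the cocontraction's upper edge with its other lower edge; (iii) a weakening whose lower edge is an upper edge of a cut: delete both and make the cut's other upper edge the upper edge of a new coweakening; (iv) dually, an interaction one of whose lower edges is the upper edge of a coweakening: delete both and make the other lower edge the lower edge of a new weakening; (v) an edge from a weakening to a coweakening: delete it and both vertices; (vi) a weakening whose lower edge is the upper edge of a cocontraction: replace by two weakenings whose lower edges are the cocontraction's two lower edges; (vii) dually, a coweakening whose upper edge is the lower edge of a contraction: replace by two coweakenings whose upper edges are the contraction's two upper edges. *)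

theory Defs
  imports Main
begin

text \<open>Atoms are pairs (name, polarity); the involution flips the polarity.
  This is a fixed-point-free involution, and every such involution is of this form.\<close>
type_synonym 'a atom = "'a \<times> bool"

definition dual :: "'a atom \<Rightarrow> 'a atom" where
  "dual a = (fst a, \<not> snd a)"

datatype 'a fm = FF | TT | At "'a atom" | Or "'a fm" "'a fm" | And "'a fm" "'a fm"

text \<open>Positions in a formula: paths, False = left argument, True = right argument.\<close>
type_synonym pos = "bool list"

fun atom_pos :: "'a fm \<Rightarrow> pos set" where
  "atom_pos (At a) = {[]}"
| "atom_pos (Or l r) = (Cons False) ` atom_pos l \<union> (Cons True) ` atom_pos r"
| "atom_pos (And l r) = (Cons False) ` atom_pos l \<union> (Cons True) ` atom_pos r"
| "atom_pos _ = {}"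

datatype 'a ctx = Hole | OrL "'a ctx" "'a fm" | OrR "'a fm" "'a ctx"
  | AndL "'a ctx" "'a fm" | AndR "'a fm" "'a ctx"

fun fill :: "'a ctx \<Rightarrow> 'a fm \<Rightarrow> 'a fm" where
  "fill Hole x = x"
| "fill (OrL c r) x = Or (fill c x) r"
| "fill (OrR l c) x = Or l (fill c x)"
| "fill (AndL c r) x = And (fill c x) r"
| "fill (AndR l c) x = And l (fill c x)"

fun hole_path :: "'a ctx \<Rightarrow> pos" where
  "hole_path Hole = []"
| "hole_path (OrL c r) = False # hole_path c"
| "hole_path (OrR l c) = True # hole_path c"
| "hole_path (AndL c r) = False # hole_path c"
| "hole_path (AndR l c) = True # hole_path c"

datatype 'a eqn =
    CommOr "'a fm" "'a fm"
  | CommAnd "'a fm" "'a fm"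
  | AssocOr "'a fm" "'a fm" "'a fm"
  | AssocAnd "'a fm" "'a fm" "'a fm"
  | UnitOr "'a fm"
  | UnitAnd "'a fm"
  | TTOr
  | FFAnd

fun eq_lhs :: "'a eqn \<Rightarrow> 'a fm" where
  "eq_lhs (CommOr a b) = Or a b"
| "eq_lhs (CommAnd a b) = And a b"
| "eq_lhs (AssocOr a b c) = Or (Or a b) c"
| "eq_lhs (AssocAnd a b c) = And (And a b) c"
| "eq_lhs (UnitOr a) = Or a FF"
| "eq_lhs (UnitAnd a) = And a TT"
| "eq_lhs TTOr = Or TT TT"
| "eq_lhs FFAnd = And FF FF"

fun eq_rhs :: "'a eqn \<Rightarrow> 'a fm" where
  "eq_rhs (CommOr a b) = Or b a"
| "eq_rhs (CommAnd a b) = And b a"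
| "eq_rhs (AssocOr a b c) = Or a (Or b c)"
| "eq_rhs (AssocAnd a b c) = And a (And b c)"
| "eq_rhs (UnitOr a) = a"
| "eq_rhs (UnitAnd a) = a"
| "eq_rhs TTOr = TT"
| "eq_rhs FFAnd = FF"

text \<open>Positions of the instantiated metavariables: pairs (position in lhs, position in rhs).\<close>
fun eq_vars :: "'a eqn \<Rightarrow> (pos \<times> pos) list" where
  "eq_vars (CommOr a b) = [([False],[True]), ([True],[False])]"
| "eq_vars (CommAnd a b) = [([False],[True]), ([True],[False])]"
| "eq_vars (AssocOr a b c) = [([False,False],[False]), ([False,True],[True,False]), ([True],[True,True])]"
| "eq_vars (AssocAnd a b c) = [([False,False],[False]), ([False,True],[True,False]), ([True],[True,True])]"
| "eq_vars (UnitOr a) = [([False],[])]"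
| "eq_vars (UnitAnd a) = [([False],[])]"
| "eq_vars TTOr = []"
| "eq_vars FFAnd = []"

text \<open>Rule instances. \<open>Eqn e True\<close> rewrites lhs to rhs, \<open>Eqn e False\<close> rhs to lhs.\<close>
datatype 'a rinst =
    AiD "'a atom" | AwD "'a atom" | AcD "'a atom"
  | AiU "'a atom" | AwU "'a atom" | AcU "'a atom"
  | Switch "'a fm" "'a fm" "'a fm"
  | Medial "'a fm" "'a fm" "'a fm" "'a fm"
  | Eqn "'a eqn" bool

fun rprem :: "'a rinst \<Rightarrow> 'a fm" where
  "rprem (AiD a) = TT"
| "rprem (AwD a) = FF"
| "rprem (AcD a) = Or (At a) (At a)"
| "rprem (AiU a) = And (At a) (At (dual a))"
| "rprem (AwU a) = At a"
| "rprem (AcU a) = At a"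
| "rprem (Switch a b c) = And a (Or b c)"
| "rprem (Medial a b c d) = Or (And a b) (And c d)"
| "rprem (Eqn e d) = (if d then eq_lhs e else eq_rhs e)"

fun rconcl :: "'a rinst \<Rightarrow> 'a fm" where
  "rconcl (AiD a) = Or (At a) (At (dual a))"
| "rconcl (AwD a) = At a"
| "rconcl (AcD a) = At a"
| "rconcl (AiU a) = FF"
| "rconcl (AwU a) = TT"
| "rconcl (AcU a) = And (At a) (At a)"
| "rconcl (Switch a b c) = Or (And a b) c"
| "rconcl (Medial a b c d) = And (Or a c) (Or b d)"
| "rconcl (Eqn e d) = (if d then eq_rhs e else eq_lhs e)"

text \<open>Metavariable positions (position in premiss, position in conclusion) for the
  non-atomic rules (switch, medial, equations).\<close>
fun rvars :: "'a rinst \<Rightarrow> (pos \<times> pos) list" where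
  "rvars (Switch a b c) = [([False],[False,False]), ([True,False],[False,True]), ([True,True],[True])]"
| "rvars (Medial a b c d) = [([False,False],[False,False]), ([False,True],[True,False]),
                             ([True,False],[False,True]), ([True,True],[True,True])]"
| "rvars (Eqn e d) = (if d then eq_vars e else map (\<lambda>(x,y). (y,x)) (eq_vars e))"
| "rvars _ = []"

datatype kind = KAiD | KAwD | KAcD | KAiU | KAwU | KAcU

fun rkind :: "'a rinst \<Rightarrow> kind option" where
  "rkind (AiD a) = Some KAiD"
| "rkind (AwD a) = Some KAwD"
| "rkind (AcD a) = Some KAcD"
| "rkind (AiU a) = Some KAiU"
| "rkind (AwU a) = Some KAwU"
| "rkind (AcU a) = Some KAcU"
| "rkind _ = None"

definition is_atomic :: "'a rinst \<Rightarrow> bool" where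
  "is_atomic r \<longleftrightarrow> rkind r \<noteq> None"

text \<open>Tracing an atom occurrence in the conclusion of a non-atomic rule instance back to
  its occurrence in the premiss.\<close>
definition back_pos :: "'a rinst \<Rightarrow> pos \<Rightarrow> pos" where
  "back_pos r q = (case find (\<lambda>(pp, pc). take (length pc) q = pc) (rvars r) of
       Some (pp, pc) \<Rightarrow> pp @ drop (length pc) q
     | None \<Rightarrow> q)"

type_synonym 'a step = "'a ctx \<times> 'a rinst"

fun derivation :: "'a fm \<Rightarrow> 'a step list \<Rightarrow> 'a fm \<Rightarrow> bool" where
  "derivation A [] B \<longleftrightarrow> A = B"
| "derivation A ((c, r) # s) B \<longleftrightarrow> A = fill c (rprem r) \<and> derivation (fill c (rconcl r)) s B"

text \<open>An atomic flow: vertices, edges, labelling, and the maps up, lo, where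
  \<open>None\<close> stands for the top (for up) resp. bottom (for lo) boundary.\<close>
record ('v, 'e) flow =
  fverts :: "'v set"
  fedges :: "'e set"
  flab :: "'v \<Rightarrow> kind"
  fup :: "'e \<Rightarrow> 'v option"
  flo :: "'e \<Rightarrow> 'v option"

inductive dpath :: "('v, 'e) flow \<Rightarrow> 'v \<Rightarrow> 'v \<Rightarrow> bool" for G where
  one: "e \<in> fedges G \<Longrightarrow> fup G e = Some v \<Longrightarrow> flo G e = Some w \<Longrightarrow> dpath G v w"
| more: "dpath G v u \<Longrightarrow> e \<in> fedges G \<Longrightarrow> fup G e = Some u \<Longrightarrow> flo G e = Some w \<Longrightarrow> dpath G v w"

definition streamlined_flow :: "('v, 'e) flow \<Rightarrow> bool" where
  "streamlined_flow G \<longleftrightarrow>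
     (\<forall>v\<in>fverts G. \<forall>w\<in>fverts G.
        flab G v \<in> {KAiD, KAwD} \<and> flab G w \<in> {KAiU, KAwU} \<longrightarrow> \<not> dpath G v w)"

definition edge_between :: "('v, 'e) flow \<Rightarrow> 'e \<Rightarrow> kind \<Rightarrow> kind \<Rightarrow> bool" where
  "edge_between G e k1 k2 \<longleftrightarrow> e \<in> fedges G \<and>
     (\<exists>v w. fup G e = Some v \<and> flo G e = Some w \<and> v \<in> fverts G \<and> w \<in> fverts G
            \<and> flab G v = k1 \<and> flab G w = k2)"

text \<open>Normality w.r.t. the weakening reductions (i)-(vii): none of their redexes occurs.\<close>
definition weak_normal :: "('v, 'e) flow \<Rightarrow> bool" where
  "weak_normal G \<longleftrightarrow> (\<forall>e.
       \<not> edge_between G e KAwD KAcD      \<comment> \<open>(i)\<close>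
     \<and> \<not> edge_between G e KAcU KAwU      \<comment> \<open>(ii)\<close>
     \<and> \<not> edge_between G e KAwD KAiU      \<comment> \<open>(iii)\<close>
     \<and> \<not> edge_between G e KAiD KAwU      \<comment> \<open>(iv)\<close>
     \<and> \<not> edge_between G e KAwD KAwU      \<comment> \<open>(v)\<close>
     \<and> \<not> edge_between G e KAwD KAcU      \<comment> \<open>(vi)\<close>
     \<and> \<not> edge_between G e KAcD KAwU)    \<comment> \<open>(vii)\<close>"

text \<open>Vertices are indices of steps of atomic rules. Edges are identified by their
  lower end: \<open>UpE j q\<close> is the upper edge of vertex j at position q of the premiss of the
  redex; \<open>FinE p\<close> is the edge of the atom occurrence at position p of the conclusion.\<close>
datatype edge = UpE nat pos | FinE pos

text \<open>\<open>trace s k p\<close>: the upper end of the edge of the atom occurrence at position p of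
  the k-th formula of the derivation (formula 0 is the premiss); None means the top.\<close>
fun trace :: "'a step list \<Rightarrow> nat \<Rightarrow> pos \<Rightarrow> nat option" where
  "trace s 0 p = None"
| "trace s (Suc k) p =
     (let c = fst (s ! k); r = snd (s ! k); h = hole_path c in
      if take (length h) p = h then
        (if is_atomic r then Some k
         else trace s k (h @ back_pos r (drop (length h) p)))
      else trace s k p)"

definition flow_of :: "'a step list \<Rightarrow> 'a fm \<Rightarrow> (nat, edge) flow" where
  "flow_of s B =
    \<lparr> fverts = {j. j < length s \<and> is_atomic (snd (s ! j))},
      fedges = {UpE j q | j q. j < length s \<and> is_atomic (snd (s ! j)) \<and> q \<in> atom_pos (rprem (snd (s ! j)))}
               \<union> {FinE p | p. p \<in> atom_pos B},
      flab = (\<lambda>j. the (rkind (snd (s ! j)))),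
      fup = (\<lambda>e. case e of UpE j q \<Rightarrow> trace s j (hole_path (fst (s ! j)) @ q)
                         | FinE p \<Rightarrow> trace s (length s) p),
      flo = (\<lambda>e. case e of UpE j q \<Rightarrow> Some j | FinE p \<Rightarrow> None) \<rparr>"

definition streamlined :: "'a step list \<Rightarrow> 'a fm \<Rightarrow> bool" where
  "streamlined s B \<longleftrightarrow> streamlined_flow (flow_of s B)"

definition super_streamlined :: "'a step list \<Rightarrow> 'a fm \<Rightarrow> bool" where
  "super_streamlined s B \<longleftrightarrow> streamlined s B \<and> weak_normal (flow_of s B)"

end

theory Submission
  imports Defs "HOL-Library.Multiset"
begin


definition kinds :: "'a step list \<Rightarrow> kind set" where
  "kinds s = {k. \<exists>x\<in>set s. rkind (snd x) = Some k}"

definition der :: "kind set \<Rightarrow> 'a fm \<Rightarrow> 'a fm \<Rightarrow> bool" where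
  "der K A B \<longleftrightarrow> (\<exists>s. derivation A s B \<and> kinds s \<subseteq> K)"

lemma derivation_append:
  "derivation A (s @ t) C \<longleftrightarrow> (\<exists>B. derivation A s B \<and> derivation B t C)"
  by (induction s arbitrary: A) auto

lemma kinds_append[simp]: "kinds (s @ t) = kinds s \<union> kinds t"
  unfolding kinds_def by auto

lemma der_refl[simp]: "der K A A"
  unfolding der_def by (rule exI[of _ "[]"]) (auto simp: kinds_def)

lemma der_trans[trans]: "der K A B \<Longrightarrow> der K B C \<Longrightarrow> der K A C"
  unfolding der_def by (metis derivation_append kinds_append le_sup_iff)

lemma der_mono: "der K A B \<Longrightarrow> K \<subseteq> L \<Longrightarrow> der L A B"
  unfolding der_def by blast

fun cc :: "'a ctx \<Rightarrow> 'a ctx \<Rightarrow> 'a ctx" where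
  "cc Hole d = d"
| "cc (OrL c r) d = OrL (cc c d) r"
| "cc (OrR l c) d = OrR l (cc c d)"
| "cc (AndL c r) d = AndL (cc c d) r"
| "cc (AndR l c) d = AndR l (cc c d)"

lemma fill_cc[simp]: "fill (cc c d) x = fill c (fill d x)"
  by (induction c) auto

lemma derivation_ctx:
  "derivation A s B \<Longrightarrow> derivation (fill c A) (map (\<lambda>(d,r). (cc c d, r)) s) (fill c B)"
  by (induction s arbitrary: A) auto

lemma kinds_ctx: "kinds (map (\<lambda>(d,r). (cc c d, r)) s) = kinds s"
  unfolding kinds_def by (force split: prod.splits)

lemma der_ctx: "der K A B \<Longrightarrow> der K (fill c A) (fill c B)"
  unfolding der_def using derivation_ctx kinds_ctx by metis

lemma der_rule: "(\<And>k. rkind r = Some k \<Longrightarrow> k \<in> K) \<Longrightarrow> der K (rprem r) (rconcl r)"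
  unfolding der_def
  by (rule exI[of _ "[(Hole, r)]"]) (auto simp: kinds_def)

lemma der_OrL: "der K A B \<Longrightarrow> der K (Or A C) (Or B C)"
  using der_ctx[of K A B "OrL Hole C"] by simp
lemma der_OrR: "der K A B \<Longrightarrow> der K (Or C A) (Or C B)"
  using der_ctx[of K A B "OrR C Hole"] by simp
lemma der_AndL: "der K A B \<Longrightarrow> der K (And A C) (And B C)"
  using der_ctx[of K A B "AndL Hole C"] by simp
lemma der_AndR: "der K A B \<Longrightarrow> der K (And C A) (And C B)"
  using der_ctx[of K A B "AndR C Hole"] by simp

lemma der_Or: "der K A A' \<Longrightarrow> der K B B' \<Longrightarrow> der K (Or A B) (Or A' B')"
  by (meson der_OrL der_OrR der_trans)
lemma der_And: "der K A A' \<Longrightarrow> der K B B' \<Longrightarrow> der K (And A B) (And A' B')"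
  by (meson der_AndL der_AndR der_trans)

lemma der_eqn1: "der K (eq_lhs e) (eq_rhs e)"
  using der_rule[of "Eqn e True" K] by simp
lemma der_eqn2: "der K (eq_rhs e) (eq_lhs e)"
  using der_rule[of "Eqn e False" K] by simp

lemma or_comm: "der K (Or a b) (Or b a)" using der_eqn1[of K "CommOr a b"] by simp
lemma and_comm: "der K (And a b) (And b a)" using der_eqn1[of K "CommAnd a b"] by simp
lemma or_assoc1: "der K (Or (Or a b) c) (Or a (Or b c))" using der_eqn1[of K "AssocOr a b c"] by simp
lemma or_assoc2: "der K (Or a (Or b c)) (Or (Or a b) c)" using der_eqn2[of K "AssocOr a b c"] by simp
lemma and_assoc1: "der K (And (And a b) c) (And a (And b c))" using der_eqn1[of K "AssocAnd a b c"] by simp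
lemma and_assoc2: "der K (And a (And b c)) (And (And a b) c)" using der_eqn2[of K "AssocAnd a b c"] by simp
lemma or_unit1: "der K (Or a FF) a" using der_eqn1[of K "UnitOr a"] by simp
lemma or_unit2: "der K a (Or a FF)" using der_eqn2[of K "UnitOr a"] by simp
lemma and_unit1: "der K (And a TT) a" using der_eqn1[of K "UnitAnd a"] by simp
lemma and_unit2: "der K a (And a TT)" using der_eqn2[of K "UnitAnd a"] by simp
lemma tt_or1: "der K (Or TT TT) TT" using der_eqn1[of K "TTOr"] by simp
lemma tt_or2: "der K TT (Or TT TT)" using der_eqn2[of K "TTOr"] by simp
lemma ff_and1: "der K (And FF FF) FF" using der_eqn1[of K "FFAnd"] by simp
lemma ff_and2: "der K FF (And FF FF)" using der_eqn2[of K "FFAnd"] by simp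
lemma or_unitl1: "der K (Or FF a) a" by (meson or_comm or_unit1 der_trans)
lemma or_unitl2: "der K a (Or FF a)" by (meson or_comm or_unit2 der_trans)
lemma and_unitl1: "der K (And TT a) a" by (meson and_comm and_unit1 der_trans)
lemma and_unitl2: "der K a (And TT a)" by (meson and_comm and_unit2 der_trans)

lemma switch: "der K (And a (Or b c)) (Or (And a b) c)"
  using der_rule[of "Switch a b c" K] by simp
lemma medial: "der K (Or (And a b) (And c d)) (And (Or a c) (Or b d))"
  using der_rule[of "Medial a b c d" K] by simp

lemma ff_tt: "der K FF TT"
proof -
  have "der K FF (And FF TT)" by (rule and_unit2)
  also have "der K (And FF TT) (And FF (Or FF TT))" by (rule der_AndR, rule or_unitl2)
  also have "der K (And FF (Or FF TT)) (Or (And FF FF) TT)" by (rule switch)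
  also have "der K (Or (And FF FF) TT) (Or FF TT)" by (rule der_OrL, rule ff_and1)
  also have "der K (Or FF TT) TT" by (rule or_unitl1)
  finally show ?thesis .
qed


definition cnj :: "'a fm list \<Rightarrow> 'a fm" where "cnj xs = foldr And xs TT"
definition dsj :: "'a fm list \<Rightarrow> 'a fm" where "dsj xs = foldr Or xs FF"

lemma conj_simps[simp]: "cnj [] = TT" "cnj (x # xs) = And x (cnj xs)"
  by (auto simp: cnj_def)
lemma disj_simps[simp]: "dsj [] = FF" "dsj (x # xs) = Or x (dsj xs)"
  by (auto simp: dsj_def)

lemma conj_append1: "der K (cnj (xs @ ys)) (And (cnj xs) (cnj ys))"
proof (induction xs)
  case Nil then show ?case by (simp add: and_unitl2)
next
  case (Cons x xs)
  have "der K (And x (cnj (xs @ ys))) (And x (And (cnj xs) (cnj ys)))"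
    using Cons by (rule der_AndR)
  also have "der K \<dots> (And (And x (cnj xs)) (cnj ys))" by (rule and_assoc2)
  finally show ?case by simp
qed

lemma conj_append2: "der K (And (cnj xs) (cnj ys)) (cnj (xs @ ys))"
proof (induction xs)
  case Nil then show ?case by (simp add: and_unitl1)
next
  case (Cons x xs)
  have "der K (And (And x (cnj xs)) (cnj ys)) (And x (And (cnj xs) (cnj ys)))" by (rule and_assoc1)
  also have "der K \<dots> (And x (cnj (xs @ ys)))"
    using Cons by (rule der_AndR)
  finally show ?case by simp
qed

lemma disj_append2: "der K (Or (dsj xs) (dsj ys)) (dsj (xs @ ys))"
proof (induction xs)
  case Nil then show ?case by (simp add: or_unitl1)
next
  case (Cons x xs)
  have "der K (Or (Or x (dsj xs)) (dsj ys)) (Or x (Or (dsj xs) (dsj ys)))" by (rule or_assoc1)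
  also have "der K \<dots> (Or x (dsj (xs @ ys)))"
    using Cons by (rule der_OrR)
  finally show ?case by simp
qed

lemma conj_concat: "der K (cnj (concat xss)) (cnj (map cnj xss))"
proof (induction xss)
  case Nil then show ?case by simp
next
  case (Cons xs xss)
  have "der K (cnj (xs @ concat xss)) (And (cnj xs) (cnj (concat xss)))" by (rule conj_append1)
  also have "der K \<dots> (And (cnj xs) (cnj (map cnj xss)))" using Cons by (rule der_AndR)
  finally show ?case by simp
qed

lemma disj_concat: "der K (dsj (map dsj xss)) (dsj (concat xss))"
proof (induction xss)
  case Nil then show ?case by simp
next
  case (Cons xs xss)
  have "der K (Or (dsj xs) (dsj (map dsj xss))) (Or (dsj xs) (dsj (concat xss)))"
    using Cons by (rule der_OrR)
  also have "der K \<dots> (dsj (xs @ concat xss))" by (rule disj_append2)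
  finally show ?case by simp
qed

lemma conj_map: "(\<And>x. x \<in> set xs \<Longrightarrow> der K (f x) (g x)) \<Longrightarrow> der K (cnj (map f xs)) (cnj (map g xs))"
  by (induction xs) (auto intro: der_And)
lemma disj_map: "(\<And>x. x \<in> set xs \<Longrightarrow> der K (f x) (g x)) \<Longrightarrow> der K (dsj (map f xs)) (dsj (map g xs))"
  by (induction xs) (auto intro: der_Or)

lemma and_swap: "der K (And (And a b) (And c d)) (And (And a c) (And b d))"
proof -
  have "der K (And (And a b) (And c d)) (And a (And b (And c d)))" by (rule and_assoc1)
  also have "der K \<dots> (And a (And (And b c) d))" by (rule der_AndR, rule and_assoc2)
  also have "der K \<dots> (And a (And (And c b) d))" by (rule der_AndR, rule der_AndL, rule and_comm)
  also have "der K \<dots> (And a (And c (And b d)))" by (rule der_AndR, rule and_assoc1)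
  also have "der K \<dots> (And (And a c) (And b d))" by (rule and_assoc2)
  finally show ?thesis .
qed

lemma conj_perm: "mset xs = mset ys \<Longrightarrow> der K (cnj xs) (cnj ys)"
proof (induction xs arbitrary: ys)
  case Nil then show ?case by simp
next
  case (Cons x xs)
  then have "x \<in> set ys" by (metis list.set_intros(1) set_mset_mset)
  then obtain ys1 ys2 where ys: "ys = ys1 @ x # ys2" by (meson split_list)
  with Cons.prems have m: "mset xs = mset (ys1 @ ys2)" by simp
  have "der K (And x (cnj xs)) (And x (cnj (ys1 @ ys2)))" using Cons.IH[OF m] by (rule der_AndR)
  also have "der K \<dots> (And x (And (cnj ys1) (cnj ys2)))" by (rule der_AndR, rule conj_append1)
  also have "der K \<dots> (And (And x (cnj ys1)) (cnj ys2))" by (rule and_assoc2)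
  also have "der K \<dots> (And (And (cnj ys1) x) (cnj ys2))" by (rule der_AndL, rule and_comm)
  also have "der K \<dots> (And (cnj ys1) (And x (cnj ys2)))" by (rule and_assoc1)
  also have "der K \<dots> (cnj (ys1 @ x # ys2))" using conj_append2[of K ys1 "x # ys2"] by simp
  finally show ?case using ys by simp
qed

lemma conj_medial: "der K (Or (cnj (map f ds)) (cnj (map g ds))) (cnj (map (\<lambda>d. Or (f d) (g d)) ds))"
proof (induction ds)
  case Nil then show ?case by (simp add: tt_or1)
next
  case (Cons d ds)
  have "der K (Or (And (f d) (cnj (map f ds))) (And (g d) (cnj (map g ds))))
      (And (Or (f d) (g d)) (Or (cnj (map f ds)) (cnj (map g ds))))" by (rule medial)
  also have "der K \<dots> (And (Or (f d) (g d)) (cnj (map (\<lambda>d. Or (f d) (g d)) ds)))"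
    using Cons by (rule der_AndR)
  finally show ?case by simp
qed

lemma conj_zip_and: "der K (And (cnj (map f ds)) (cnj (map g ds))) (cnj (map (\<lambda>d. And (f d) (g d)) ds))"
proof (induction ds)
  case Nil then show ?case by (simp add: and_unit1)
next
  case (Cons d ds)
  have "der K (And (And (f d) (cnj (map f ds))) (And (g d) (cnj (map g ds))))
      (And (And (f d) (g d)) (And (cnj (map f ds)) (cnj (map g ds))))" by (rule and_swap)
  also have "der K \<dots> (And (And (f d) (g d)) (cnj (map (\<lambda>d. And (f d) (g d)) ds)))"
    using Cons by (rule der_AndR)
  finally show ?case by simp
qed

lemma switch_distr: "der K (And (dsj (map f ds)) (cnj (map g ds))) (dsj (map (\<lambda>d. And (f d) (g d)) ds))"
proof (induction ds)
  case Nil then show ?case by (simp add: and_unit1)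
next
  case (Cons d ds)
  let ?X = "dsj (map f ds)" and ?Y = "cnj (map g ds)"
  have "der K (And (Or (f d) ?X) (And (g d) ?Y)) (And (And (g d) ?Y) (Or (f d) ?X))" by (rule and_comm)
  also have "der K \<dots> (And (And ?Y (g d)) (Or (f d) ?X))" by (rule der_AndL, rule and_comm)
  also have "der K \<dots> (And ?Y (And (g d) (Or (f d) ?X)))" by (rule and_assoc1)
  also have "der K \<dots> (And ?Y (Or (And (g d) (f d)) ?X))" by (rule der_AndR, rule switch)
  also have "der K \<dots> (And ?Y (Or ?X (And (g d) (f d))))" by (rule der_AndR, rule or_comm)
  also have "der K \<dots> (Or (And ?Y ?X) (And (g d) (f d)))" by (rule switch)
  also have "der K \<dots> (Or (And (g d) (f d)) (And ?Y ?X))" by (rule or_comm)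
  also have "der K \<dots> (Or (And (f d) (g d)) (And ?X ?Y))" by (rule der_Or; rule and_comm)
  also have "der K \<dots> (Or (And (f d) (g d)) (dsj (map (\<lambda>d. And (f d) (g d)) ds)))"
    using Cons by (rule der_OrR)
  finally show ?case by simp
qed

lemma ff_conj: "der K FF (cnj (map (\<lambda>_. FF) ds))"
proof (induction ds)
  case Nil then show ?case by (simp add: ff_tt)
next
  case (Cons d ds)
  show ?case using der_trans[OF ff_and2 der_AndR[OF Cons.IH]] by simp
qed

lemma tt_conj: "der K TT (cnj (map (\<lambda>_. TT) ds))"
proof (induction ds)
  case Nil then show ?case by simp
next
  case (Cons d ds)
  show ?case using der_trans[OF and_unit2 der_AndR[OF Cons.IH]] by simp
qed

lemma mat_medial: "der K (dsj (map (\<lambda>c. cnj (map (\<lambda>d. P c d) ds)) cs))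
                        (cnj (map (\<lambda>d. dsj (map (\<lambda>c. P c d) cs)) ds))"
proof (induction cs)
  case Nil then show ?case using ff_conj[of K ds] by simp
next
  case (Cons c cs)
  have "der K (Or (cnj (map (P c) ds)) (dsj (map (\<lambda>c. cnj (map (P c) ds)) cs)))
     (Or (cnj (map (P c) ds)) (cnj (map (\<lambda>d. dsj (map (\<lambda>c. P c d) cs)) ds)))"
    using Cons by (rule der_OrR)
  also have "der K \<dots> (cnj (map (\<lambda>d. Or (P c d) (dsj (map (\<lambda>c. P c d) cs))) ds))"
    by (rule conj_medial)
  finally show ?case by simp
qed

lemma atomfree_tt: "atom_pos F = {} \<Longrightarrow> der K F TT"
proof (induction F)
  case FF then show ?case by (simp add: ff_tt)
next
  case TT then show ?case by simp
next
  case (At a) then show ?case by simp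
next
  case (Or l r)
  then have "der K (Or l r) (Or TT TT)" by (auto intro: der_Or)
  then show ?case by (meson der_trans tt_or1)
next
  case (And l r)
  then have "der K (And l r) (And TT TT)" by (auto intro: der_And)
  then show ?case by (meson der_trans and_unit1)
qed


lemma dual_dual[simp]: "dual (dual a) = a"
  by (cases a) (simp add: dual_def)
lemma dual_neq[simp]: "dual a \<noteq> a"
  by (cases a) (simp add: dual_def)

fun evalA :: "('a \<Rightarrow> bool) \<Rightarrow> 'a atom \<Rightarrow> bool" where
  "evalA v (x, b) = (v x = b)"

lemma evalA_dual[simp]: "evalA v (dual a) = (\<not> evalA v a)"
  by (cases a) (auto simp: dual_def)

fun eval :: "('a \<Rightarrow> bool) \<Rightarrow> 'a fm \<Rightarrow> bool" where
  "eval v FF = False"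
| "eval v TT = True"
| "eval v (At a) = evalA v a"
| "eval v (Or l r) = (eval v l \<or> eval v r)"
| "eval v (And l r) = (eval v l \<and> eval v r)"

fun lab :: "'a fm \<Rightarrow> pos \<Rightarrow> 'a atom" where
  "lab (At a) [] = a"
| "lab (Or l r) (b # p) = (if b then lab r p else lab l p)"
| "lab (And l r) (b # p) = (if b then lab r p else lab l p)"
| "lab _ _ = undefined"

fun cl :: "'a fm \<Rightarrow> pos list list" where
  "cl FF = []"
| "cl TT = [[]]"
| "cl (At a) = [[[]]]"
| "cl (Or l r) = map (map (Cons False)) (cl l) @ map (map (Cons True)) (cl r)"
| "cl (And l r) = concat (map (\<lambda>c1. map (\<lambda>c2. map (Cons False) c1 @ map (Cons True) c2) (cl r)) (cl l))"

lemma eval_cl: "eval v F \<longleftrightarrow> (\<exists>c\<in>set (cl F). \<forall>p\<in>set c. evalA v (lab F p))"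
proof (induction F)
  case (Or l r)
  have "(\<exists>c\<in>set (cl (Or l r)). \<forall>p\<in>set c. evalA v (lab (Or l r) p)) \<longleftrightarrow>
    (\<exists>c\<in>set (cl l). \<forall>p\<in>set c. evalA v (lab l p)) \<or> (\<exists>c\<in>set (cl r). \<forall>p\<in>set c. evalA v (lab r p))"
  proof
    assume "\<exists>c\<in>set (cl (Or l r)). \<forall>p\<in>set c. evalA v (lab (Or l r) p)"
    then obtain c where c: "c \<in> set (cl (Or l r))" "\<forall>p\<in>set c. evalA v (lab (Or l r) p)" by blast
    from c(1) have "(\<exists>c1\<in>set (cl l). c = map (Cons False) c1) \<or> (\<exists>c2\<in>set (cl r). c = map (Cons True) c2)"
      by (simp only: cl.simps set_append set_map Un_iff image_iff)
    then show "(\<exists>c\<in>set (cl l). \<forall>p\<in>set c. evalA v (lab l p)) \<or> (\<exists>c\<in>set (cl r). \<forall>p\<in>set c. evalA v (lab r p))"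
    proof (elim disjE bexE)
      fix c1 assume "c1 \<in> set (cl l)" "c = map (Cons False) c1"
      then show ?thesis using c(2) by (intro disjI1 bexI[of _ c1]) auto
    next
      fix c1 assume "c1 \<in> set (cl r)" "c = map (Cons True) c1"
      then show ?thesis using c(2) by (intro disjI2 bexI[of _ c1]) auto
    qed
  next
    assume "(\<exists>c\<in>set (cl l). \<forall>p\<in>set c. evalA v (lab l p)) \<or> (\<exists>c\<in>set (cl r). \<forall>p\<in>set c. evalA v (lab r p))"
    then show "\<exists>c\<in>set (cl (Or l r)). \<forall>p\<in>set c. evalA v (lab (Or l r) p)"
    proof
      assume "\<exists>c\<in>set (cl l). \<forall>p\<in>set c. evalA v (lab l p)"
      then obtain c where "c \<in> set (cl l)" "\<forall>p\<in>set c. evalA v (lab l p)" by blast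
      then show ?thesis by (intro bexI[of _ "map (Cons False) c"]) auto
    next
      assume "\<exists>c\<in>set (cl r). \<forall>p\<in>set c. evalA v (lab r p)"
      then obtain c where "c \<in> set (cl r)" "\<forall>p\<in>set c. evalA v (lab r p)" by blast
      then show ?thesis by (intro bexI[of _ "map (Cons True) c"]) auto
    qed
  qed
  then show ?case using Or by simp
next
  case (And l r)
  show ?case
  proof
    assume "eval v (And l r)"
    then obtain c1 c2 where "c1 \<in> set (cl l)" "\<forall>p\<in>set c1. evalA v (lab l p)"
      "c2 \<in> set (cl r)" "\<forall>p\<in>set c2. evalA v (lab r p)" using And by auto
    then show "\<exists>c\<in>set (cl (And l r)). \<forall>p\<in>set c. evalA v (lab (And l r) p)"
      by (intro bexI[of _ "map (Cons False) c1 @ map (Cons True) c2"]) auto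
  next
    assume "\<exists>c\<in>set (cl (And l r)). \<forall>p\<in>set c. evalA v (lab (And l r) p)"
    then obtain c where c: "c \<in> set (cl (And l r))" "\<forall>p\<in>set c. evalA v (lab (And l r) p)" by blast
    from c(1) obtain c1 c2 where cc: "c1 \<in> set (cl l)" "c2 \<in> set (cl r)"
      "c = map (Cons False) c1 @ map (Cons True) c2" by auto
    have "\<forall>p\<in>set c1. evalA v (lab l p)"
    proof
      fix p assume "p \<in> set c1"
      then have "False # p \<in> set c" using cc(3) by simp
      then show "evalA v (lab l p)" using c(2) by (metis lab.simps(3))
    qed
    moreover have "\<forall>p\<in>set c2. evalA v (lab r p)"
    proof
      fix p assume "p \<in> set c2"
      then have "True # p \<in> set c" using cc(3) by simp
      then show "evalA v (lab r p)" using c(2) by (metis lab.simps(3))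
    qed
    ultimately show "eval v (And l r)" using And cc by auto
  qed
qed auto

lemma cl_sub: "c \<in> set (cl F) \<Longrightarrow> set c \<subseteq> atom_pos F"
  by (induction F arbitrary: c) fastforce+

fun wk :: "'a fm \<Rightarrow> pos set \<Rightarrow> 'a fm" where
  "wk (At a) P = (if [] \<in> P then TT else At a)"
| "wk (Or l r) P = Or (wk l {p. False # p \<in> P}) (wk r {p. True # p \<in> P})"
| "wk (And l r) P = And (wk l {p. False # p \<in> P}) (wk r {p. True # p \<in> P})"
| "wk FF P = FF"
| "wk TT P = TT"

lemma atom_pos_wk: "atom_pos (wk F P) = atom_pos F - P"
  by (induction F arbitrary: P) auto

lemma lab_wk: "p \<in> atom_pos F - P \<Longrightarrow> lab (wk F P) p = lab F p"
  by (induction F arbitrary: P p) auto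

lemma cl_wk: "cl (wk F P) = map (filter (\<lambda>p. p \<notin> P)) (cl F)"
proof (induction F arbitrary: P)
  case (And l r)
  show ?case by (simp add: And comp_def filter_map map_concat)
qed (auto simp: comp_def filter_map)

lemma wk_empty[simp]: "wk F {} = F"
  by (induction F) auto

lemma wk_wk: "wk (wk F P) Q = wk F (P \<union> Q)"
  by (induction F arbitrary: P Q) (auto simp: Collect_disj_eq)

lemma der_wk: "KAwU \<in> K \<Longrightarrow> der K F (wk F P)"
proof (induction F arbitrary: P)
  case (At a)
  have "der K (At a) TT" using der_rule[of "AwU a" K] At.prems by simp
  then show ?case by simp
qed (auto intro: der_Or der_And)

fun fsize :: "'a fm \<Rightarrow> nat" where
  "fsize (Or l r) = Suc (fsize l + fsize r)"
| "fsize (And l r) = Suc (fsize l + fsize r)"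
| "fsize _ = 1"

lemma fsize_wk[simp]: "fsize (wk F P) = fsize F"
  by (induction F arbitrary: P) auto

fun neg :: "'a fm \<Rightarrow> 'a fm" where
  "neg FF = TT"
| "neg TT = FF"
| "neg (At a) = At (dual a)"
| "neg (Or l r) = And (neg l) (neg r)"
| "neg (And l r) = Or (neg l) (neg r)"

lemma neg_neg[simp]: "neg (neg F) = F"
  by (induction F) auto

lemma eval_neg[simp]: "eval v (neg F) = (\<not> eval v F)"
  by (induction F) auto

lemma atom_pos_neg[simp]: "atom_pos (neg F) = atom_pos F"
  by (induction F) auto

lemma lab_neg: "p \<in> atom_pos F \<Longrightarrow> lab (neg F) p = dual (lab F p)"
  by (induction F arbitrary: p) auto

lemma neg_cnj: "neg (cnj xs) = dsj (map neg xs)"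
  by (induction xs) auto
lemma neg_dsj: "neg (dsj xs) = cnj (map neg xs)"
  by (induction xs) auto

lemma eval_fill_mono: "(eval v x \<longrightarrow> eval v y) \<Longrightarrow> eval v (fill c x) \<Longrightarrow> eval v (fill c y)"
  by (induction c) auto

lemma eval_eqn: "eval v (eq_lhs e) = eval v (eq_rhs e)"
  by (cases e) auto

lemma rule_sound: "eval v (rprem r) \<Longrightarrow> eval v (rconcl r)"
  by (cases r) (auto simp: eval_eqn split: if_splits)

lemma derivation_sound: "derivation A s B \<Longrightarrow> eval v A \<Longrightarrow> eval v B"
proof (induction s arbitrary: A)
  case Nil then show ?case by simp
next
  case (Cons st s)
  obtain c r where st: "st = (c, r)" by fastforce
  with Cons.prems have A: "A = fill c (rprem r)" and d: "derivation (fill c (rconcl r)) s B" by auto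
  have "eval v (fill c (rconcl r))" using eval_fill_mono[of v "rprem r" "rconcl r" c] rule_sound Cons.prems(2) A by blast
  then show ?case using Cons.IH d by blast
qed

fun dk :: "kind \<Rightarrow> kind" where
  "dk KAiD = KAiU" | "dk KAwD = KAwU" | "dk KAcD = KAcU"
| "dk KAiU = KAiD" | "dk KAwU = KAwD" | "dk KAcU = KAcD"

fun negc :: "'a ctx \<Rightarrow> 'a ctx" where
  "negc Hole = Hole"
| "negc (OrL c r) = AndL (negc c) (neg r)"
| "negc (OrR l c) = AndR (neg l) (negc c)"
| "negc (AndL c r) = OrL (negc c) (neg r)"
| "negc (AndR l c) = OrR (neg l) (negc c)"

lemma neg_fill: "neg (fill c x) = fill (negc c) (neg x)"
  by (induction c) auto

fun deq :: "'a eqn \<Rightarrow> 'a eqn" where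
  "deq (CommOr a b) = CommAnd (neg a) (neg b)"
| "deq (CommAnd a b) = CommOr (neg a) (neg b)"
| "deq (AssocOr a b c) = AssocAnd (neg a) (neg b) (neg c)"
| "deq (AssocAnd a b c) = AssocOr (neg a) (neg b) (neg c)"
| "deq (UnitOr a) = UnitAnd (neg a)"
| "deq (UnitAnd a) = UnitOr (neg a)"
| "deq TTOr = FFAnd"
| "deq FFAnd = TTOr"

lemma deq_lhs: "neg (eq_lhs e) = eq_lhs (deq e)" by (cases e) auto
lemma deq_rhs: "neg (eq_rhs e) = eq_rhs (deq e)" by (cases e) auto

lemma rule_dual: "der (dk ` {k. rkind r = Some k}) (neg (rconcl r)) (neg (rprem r))"
proof (cases r)
  case (AiD a)
  then show ?thesis using der_rule[of "AiU (dual a)" "dk ` {k. rkind r = Some k}"] by auto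
next
  case (AwD a)
  then show ?thesis using der_rule[of "AwU (dual a)" "dk ` {k. rkind r = Some k}"] by auto
next
  case (AcD a)
  then show ?thesis using der_rule[of "AcU (dual a)" "dk ` {k. rkind r = Some k}"] by auto
next
  case (AiU a)
  have "der (dk ` {k. rkind r = Some k}) TT (Or (At (dual a)) (At a))"
    using der_rule[of "AiD (dual a)" "dk ` {k. rkind r = Some k}"] AiU by auto
  then show ?thesis using AiU by simp
next
  case (AwU a)
  then show ?thesis using der_rule[of "AwD (dual a)" "dk ` {k. rkind r = Some k}"] by auto
next
  case (AcU a)
  then show ?thesis using der_rule[of "AcD (dual a)" "dk ` {k. rkind r = Some k}"] by auto
next
  case (Switch a b c)
  let ?K = "dk ` {k. rkind r = Some k}"
  have "der ?K (And (Or (neg a) (neg b)) (neg c)) (And (neg c) (Or (neg b) (neg a)))"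
    by (meson and_comm der_AndR or_comm der_trans)
  also have "der ?K \<dots> (Or (And (neg c) (neg b)) (neg a))" by (rule switch)
  also have "der ?K \<dots> (Or (neg a) (And (neg b) (neg c)))"
    by (meson and_comm der_OrR or_comm der_trans)
  finally show ?thesis using Switch by simp
next
  case (Medial a b c d)
  then show ?thesis using medial[of "dk ` {k. rkind r = Some k}" "neg a" "neg c" "neg b" "neg d"] by simp
next
  case (Eqn e d)
  then show ?thesis
    by (cases d) (auto simp: deq_lhs deq_rhs der_eqn1 der_eqn2)
qed

lemma der_dual: "der K A B \<Longrightarrow> der (dk ` K) (neg B) (neg A)"
proof -
  have "derivation A s B \<Longrightarrow> kinds s \<subseteq> K \<Longrightarrow> der (dk ` K) (neg B) (neg A)" for s
  proof (induction s arbitrary: A)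
    case Nil then show ?case by simp
  next
    case (Cons st s)
    obtain c r where st: "st = (c, r)" by fastforce
    with Cons.prems have A: "A = fill c (rprem r)" and d: "derivation (fill c (rconcl r)) s B"
      and k: "{k. rkind r = Some k} \<subseteq> K" "kinds s \<subseteq> K" by (auto simp: kinds_def)
    have 1: "der (dk ` K) (neg B) (neg (fill c (rconcl r)))" using Cons.IH d k by blast
    have "der (dk ` K) (neg (fill c (rconcl r))) (neg (fill c (rprem r)))"
      unfolding neg_fill by (rule der_ctx, rule der_mono[OF rule_dual]) (use k in blast)
    then show ?case using 1 A der_trans by blast
  qed
  then show "der K A B \<Longrightarrow> ?thesis" unfolding der_def by blast
qed


lemma at_copies: "(\<exists>S\<in>set Ss. [] \<in> S) \<Longrightarrow> KAcU \<in> K \<Longrightarrow>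
  der K (At a) (cnj (map (\<lambda>S. if [] \<in> S then At a else TT) Ss))"
proof (induction Ss)
  case Nil then show ?case by simp
next
  case (Cons S Ss)
  show ?case
  proof (cases "\<exists>S\<in>set Ss. [] \<in> S")
    case True
    note IH = Cons.IH[OF True Cons.prems(2)]
    show ?thesis
    proof (cases "[] \<in> S")
      case True
      have "der K (At a) (And (At a) (At a))" using der_rule[of "AcU a" K] Cons.prems(2) by simp
      then show ?thesis using True der_trans[OF _ der_AndR[OF IH]] by simp
    next
      case False
      then show ?thesis using der_trans[OF and_unitl2 der_AndR[OF IH]] by simp
    qed
  next
    case False
    then have S: "[] \<in> S" using Cons.prems(1) by auto
    have e: "map (\<lambda>S. if [] \<in> S then At a else TT) Ss = map (\<lambda>_. TT) Ss" using False by auto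
    have "der K (At a) (And (At a) (cnj (map (\<lambda>_. TT) Ss)))"
      by (rule der_trans[OF and_unit2 der_AndR[OF tt_conj]])
    then show ?thesis using S by (simp only: list.map conj_simps e if_True)
  qed
qed

lemma wk_Or_comp: "wk (Or l r) (-S) = Or (wk l (-{p. False # p \<in> S})) (wk r (-{p. True # p \<in> S}))"
  by (simp add: Collect_neg_eq)
lemma wk_And_comp: "wk (And l r) (-S) = And (wk l (-{p. False # p \<in> S})) (wk r (-{p. True # p \<in> S}))"
  by (simp add: Collect_neg_eq)

lemma split_lem: "atom_pos F \<subseteq> \<Union>(set Ss) \<Longrightarrow> KAcU \<in> K \<Longrightarrow> der K F (cnj (map (\<lambda>S. wk F (-S)) Ss))"
proof (induction F arbitrary: Ss)
  case FF then show ?case using ff_conj[of K Ss] by simp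
next
  case TT then show ?case using tt_conj[of K Ss] by simp
next
  case (At a)
  then have "\<exists>S\<in>set Ss. [] \<in> S" by auto
  moreover have "map (\<lambda>S. wk (At a) (-S)) Ss = map (\<lambda>S. if [] \<in> S then At a else TT) Ss" by auto
  ultimately show ?case using at_copies[of Ss K a] At.prems(2) by metis
next
  case (Or l r)
  have hl: "atom_pos l \<subseteq> \<Union>(set (map (\<lambda>S. {p. False # p \<in> S}) Ss))" using Or.prems(1) by auto
  have l: "der K l (cnj (map (\<lambda>S. wk l (-{p. False # p \<in> S})) Ss))"
    using Or.IH(1)[OF hl Or.prems(2)] by (simp add: comp_def)
  have hr: "atom_pos r \<subseteq> \<Union>(set (map (\<lambda>S. {p. True # p \<in> S}) Ss))" using Or.prems(1) by auto
  have r: "der K r (cnj (map (\<lambda>S. wk r (-{p. True # p \<in> S})) Ss))"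
    using Or.IH(2)[OF hr Or.prems(2)] by (simp add: comp_def)
  show ?case unfolding wk_Or_comp
    by (rule der_trans[OF der_Or[OF l r] conj_medial])
next
  case (And l r)
  have hl: "atom_pos l \<subseteq> \<Union>(set (map (\<lambda>S. {p. False # p \<in> S}) Ss))" using And.prems(1) by auto
  have l: "der K l (cnj (map (\<lambda>S. wk l (-{p. False # p \<in> S})) Ss))"
    using And.IH(1)[OF hl And.prems(2)] by (simp add: comp_def)
  have hr: "atom_pos r \<subseteq> \<Union>(set (map (\<lambda>S. {p. True # p \<in> S}) Ss))" using And.prems(1) by auto
  have r: "der K r (cnj (map (\<lambda>S. wk r (-{p. True # p \<in> S})) Ss))"
    using And.IH(2)[OF hr And.prems(2)] by (simp add: comp_def)
  show ?case unfolding wk_And_comp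
    by (rule der_trans[OF der_And[OF l r] conj_zip_and])
qed


definition cf :: "'a fm \<Rightarrow> pos list \<Rightarrow> 'a fm" where
  "cf F n = cnj (map (\<lambda>p. At (lab F p)) n)"

definition sel :: "bool \<Rightarrow> pos list \<Rightarrow> pos list" where
  "sel b n = map tl (filter (\<lambda>p. hd p = b) n)"

lemma list_all2_concat_split:
  "list_all2 P (concat (map f xs)) N \<Longrightarrow> \<exists>NN. N = concat NN \<and> list_all2 (\<lambda>x row. list_all2 P (f x) row) xs NN"
proof (induction xs arbitrary: N)
  case Nil then show ?case by simp
next
  case (Cons x xs)
  then obtain us vs where "N = us @ vs" "list_all2 P (f x) us" "list_all2 P (concat (map f xs)) vs"
    by (auto simp: list_all2_append1)
  with Cons.IH[of vs] obtain NN where "vs = concat NN" "list_all2 (\<lambda>x row. list_all2 P (f x) row) xs NN" by blast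
  then show ?case using \<open>N = us @ vs\<close> \<open>list_all2 P (f x) us\<close>
    by (intro exI[of _ "us # NN"]) auto
qed

lemma list_all2_in2: "list_all2 P xs ys \<Longrightarrow> y \<in> set ys \<Longrightarrow> \<exists>x\<in>set xs. P x y"
  by (metis in_set_conv_nth list_all2_conv_all_nth)

lemma mset_sel: "(\<forall>p\<in>set n. p \<noteq> []) \<Longrightarrow> mset n = mset (map (Cons False) (sel False n) @ map (Cons True) (sel True n))"
proof (induction n)
  case Nil then show ?case by (simp add: sel_def)
next
  case (Cons p n)
  then obtain b q where p: "p = b # q" by (cases p) auto
  show ?case using Cons p by (cases b) (auto simp: sel_def)
qed

lemma cf_append: "der K (And (cf F xs) (cf F ys)) (cf F (xs @ ys))"
  unfolding cf_def using conj_append2[of K "map (\<lambda>p. At (lab F p)) xs"] by simp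

lemma at_copies2: "n \<noteq> [] \<Longrightarrow> KAcU \<in> K \<Longrightarrow> der K (At a) (cnj (map (\<lambda>_. At a) n))"
proof (induction n)
  case Nil then show ?case by simp
next
  case (Cons x n)
  show ?case
  proof (cases "n = []")
    case True then show ?thesis by (simp add: and_unit2)
  next
    case False
    have "der K (At a) (And (At a) (At a))" using der_rule[of "AcU a" K] Cons.prems(2) by simp
    then show ?thesis using der_trans[OF _ der_AndR[OF Cons.IH[OF False Cons.prems(2)]]] by simp
  qed
qed

lemma cf_tl: "(\<forall>p\<in>set n. \<exists>q. p = b # q) \<Longrightarrow> F = Or l r \<or> F = And l r \<Longrightarrow>
   cf F n = cf (if b then r else l) (map tl n)"
  unfolding cf_def by (induction n) auto

lemma cf_cons: "F = Or l r \<or> F = And l r \<Longrightarrow> cf F (map (Cons b) n) = cf (if b then r else l) n"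
  unfolding cf_def by (induction n) auto

lemma cf_concat: "der K (cf F (concat xs)) (cnj (map (cf F) xs))"
  unfolding cf_def map_concat using conj_concat[of K "map (map (\<lambda>p. At (lab F p))) xs"]
  by (simp add: comp_def)

lemma cf_perm: "mset xs = mset ys \<Longrightarrow> der K (cf F xs) (cf F ys)"
  unfolding cf_def by (rule conj_perm) simp

lemma list_all2_mono_mem: "list_all2 P xs ys \<Longrightarrow> (\<And>x y. P x y \<Longrightarrow> y \<in> set ys \<Longrightarrow> Q x y) \<Longrightarrow> list_all2 Q xs ys"
  by (auto simp: list_all2_conv_all_nth)

lemma sel_sub: "set n \<subseteq> set (map (Cons False) c1 @ map (Cons True) c2) \<Longrightarrow>
   set (sel False n) \<subseteq> set c1 \<and> set (sel True n) \<subseteq> set c2"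
  unfolding sel_def by auto

lemma in_sel: "b # p \<in> set n \<Longrightarrow> p \<in> set (sel b n)"
  unfolding sel_def by force


lemma routup:
  assumes "list_all2 (\<lambda>c n. set n \<subseteq> set c) (cl F) N" "\<forall>p\<in>atom_pos F. \<exists>n\<in>set N. p \<in> set n" "KAcU \<in> K"
  shows "der K F (dsj (map (cf F) N))"
  using assms
proof (induction "fsize F" arbitrary: F N rule: less_induct)
  case less
  show ?case
  proof (cases F)
    case FF
    then have "N = []" using less.prems(1) by simp
    then show ?thesis using FF by simp
  next
    case TT
    then obtain n where N: "N = [n]" and "set n \<subseteq> {}" using less.prems(1) by (auto simp: list_all2_Cons1)
    then have "n = []" by simp
    then show ?thesis using N TT by (simp add: cf_def or_unit2)
  next
    case (At a)
    then obtain n where N: "N = [n]" and sn: "set n \<subseteq> {[]}" using less.prems(1) by (auto simp: list_all2_Cons1)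
    have "[] \<in> set n" using less.prems(2) N At by auto
    then have ne: "n \<noteq> []" by auto
    have "cf F n = cnj (map (\<lambda>_. At a) n)" unfolding cf_def At using sn
      by (intro arg_cong[where f=cnj] map_cong) auto
    then show ?thesis using N der_trans[OF at_copies2[OF ne less.prems(3)] or_unit2] At by simp
  next
    case (Or l r)
    from less.prems(1) obtain N1 N2 where N: "N = N1 @ N2"
      and a1: "list_all2 (\<lambda>c n. set n \<subseteq> set c) (map (map (Cons False)) (cl l)) N1"
      and a2: "list_all2 (\<lambda>c n. set n \<subseteq> set c) (map (map (Cons True)) (cl r)) N2"
      unfolding Or by (auto simp: list_all2_append1)
    define Nl where "Nl = map (map tl) N1"
    define Nr where "Nr = map (map tl) N2"
    have b1: "\<forall>n\<in>set N1. \<forall>p\<in>set n. \<exists>q. p = False # q"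
    proof (intro ballI)
      fix n p assume h: "n \<in> set N1" "p \<in> set n"
      obtain c where "c \<in> set (map (map (Cons False)) (cl l))" "set n \<subseteq> set c"
        using list_all2_in2[OF a1 h(1)] by blast
      then obtain x where "set n \<subseteq> Cons False ` set x" by auto
      then show "\<exists>q. p = False # q" using h(2) by blast
    qed
    have b2: "\<forall>n\<in>set N2. \<forall>p\<in>set n. \<exists>q. p = True # q"
    proof (intro ballI)
      fix n p assume h: "n \<in> set N2" "p \<in> set n"
      obtain c where "c \<in> set (map (map (Cons True)) (cl r))" "set n \<subseteq> set c"
        using list_all2_in2[OF a2 h(1)] by blast
      then obtain x where "set n \<subseteq> Cons True ` set x" by auto
      then show "\<exists>q. p = True # q" using h(2) by blast
    qed
    have l2: "list_all2 (\<lambda>c n. set n \<subseteq> set c) (cl l) Nl"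
      using a1 unfolding Nl_def list_all2_map1 list_all2_map2 by (rule list_all2_mono) auto
    have r2: "list_all2 (\<lambda>c n. set n \<subseteq> set c) (cl r) Nr"
      using a2 unfolding Nr_def list_all2_map1 list_all2_map2 by (rule list_all2_mono) auto
    have cl: "\<forall>p\<in>atom_pos l. \<exists>n\<in>set Nl. p \<in> set n"
    proof
      fix p assume "p \<in> atom_pos l"
      then have "False # p \<in> atom_pos F" using Or by simp
      then obtain n where n: "n \<in> set N" "False # p \<in> set n" using less.prems(2) by blast
      moreover have "n \<notin> set N2" using b2 n(2) by fastforce
      ultimately have "n \<in> set N1" using N by auto
      then show "\<exists>n\<in>set Nl. p \<in> set n" unfolding Nl_def using n(2) by force
    qed
    have cr: "\<forall>p\<in>atom_pos r. \<exists>n\<in>set Nr. p \<in> set n"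
    proof
      fix p assume "p \<in> atom_pos r"
      then have "True # p \<in> atom_pos F" using Or by simp
      then obtain n where n: "n \<in> set N" "True # p \<in> set n" using less.prems(2) by blast
      moreover have "n \<notin> set N1" using b1 n(2) by fastforce
      ultimately have "n \<in> set N2" using N by auto
      then show "\<exists>n\<in>set Nr. p \<in> set n" unfolding Nr_def using n(2) by force
    qed
    have IHl: "der K l (dsj (map (cf l) Nl))" using less.hyps[of l Nl] Or l2 cl less.prems(3) by simp
    have IHr: "der K r (dsj (map (cf r) Nr))" using less.hyps[of r Nr] Or r2 cr less.prems(3) by simp
    have el: "map (cf l) Nl = map (cf F) N1"
      unfolding Nl_def map_map comp_def using b1 cf_tl[of _ False F l r] Or by (intro map_cong) auto
    have er: "map (cf r) Nr = map (cf F) N2"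
      unfolding Nr_def map_map comp_def using b2 cf_tl[of _ True F l r] Or by (intro map_cong) auto
    show ?thesis using der_trans[OF der_Or[OF IHl IHr] disj_append2] el er N Or by simp
  next
    case (And l r)
    let ?j = "\<lambda>c1 c2. map (Cons False) c1 @ map (Cons True) c2"
    let ?P = "\<lambda>c n. set n \<subseteq> set c"
    have "list_all2 ?P (concat (map (\<lambda>c1. map (?j c1) (cl r)) (cl l))) N"
      using less.prems(1) And by simp
    from list_all2_concat_split[OF this] obtain NN where N: "N = concat NN"
      and a: "list_all2 (\<lambda>c1 row. list_all2 ?P (map (?j c1) (cl r)) row) (cl l) NN" by blast
    have hn: "\<forall>row\<in>set NN. \<forall>n\<in>set row. \<exists>c1\<in>set (cl l). \<exists>c2\<in>set (cl r). set n \<subseteq> set (?j c1 c2)"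
    proof (intro ballI)
      fix row n assume hr: "row \<in> set NN" and hn: "n \<in> set row"
      obtain c1 where c1: "c1 \<in> set (cl l)" and ar: "list_all2 ?P (map (?j c1) (cl r)) row"
        using list_all2_in2[OF a hr] by blast
      obtain c where hc: "c \<in> set (map (?j c1) (cl r))" "set n \<subseteq> set c"
        using list_all2_in2[OF ar hn] by blast
      then obtain c2 where "c2 \<in> set (cl r)" "c = ?j c1 c2" by auto
      then show "\<exists>c1\<in>set (cl l). \<exists>c2\<in>set (cl r). set n \<subseteq> set (?j c1 c2)"
        using c1 hc(2) by blast
    qed
    define Nl where "Nl = map (\<lambda>row. concat (map (sel False) row)) NN"
    define S where "S = (\<lambda>row. \<Union>n\<in>set row. set (sel True n))"
    have l2: "list_all2 ?P (cl l) Nl"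
      unfolding Nl_def list_all2_map2
    proof (rule list_all2_mono[OF a])
      fix c1 row assume "list_all2 ?P (map (?j c1) (cl r)) row"
      then have "\<forall>n\<in>set row. set (sel False n) \<subseteq> set c1"
      proof (intro ballI)
        fix n assume h1: "list_all2 ?P (map (?j c1) (cl r)) row" and h2: "n \<in> set row"
        obtain c where "c \<in> set (map (?j c1) (cl r))" "set n \<subseteq> set c"
          using list_all2_in2[OF h1 h2] by blast
        then obtain c2 where "set n \<subseteq> set (?j c1 c2)" by auto
        then show "set (sel False n) \<subseteq> set c1" using sel_sub by blast
      qed
      then show "set (concat (map (sel False) row)) \<subseteq> set c1" by auto
    qed
    have cl: "\<forall>p\<in>atom_pos l. \<exists>n\<in>set Nl. p \<in> set n"
    proof
      fix p assume "p \<in> atom_pos l"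
      then have "False # p \<in> atom_pos F" using And by simp
      then obtain n where n: "n \<in> set N" "False # p \<in> set n" using less.prems(2) by blast
      then obtain row where "row \<in> set NN" "n \<in> set row" using N by auto
      then show "\<exists>n\<in>set Nl. p \<in> set n" unfolding Nl_def using in_sel[OF n(2)] by force
    qed
    have IHl: "der K l (dsj (map (cf l) Nl))" using less.hyps[of l Nl] And l2 cl less.prems(3) by simp
    have s1: "der K l (dsj (map (\<lambda>row. cnj (map (\<lambda>n. cf l (sel False n)) row)) NN))"
    proof -
      have "der K (dsj (map (cf l) Nl)) (dsj (map (\<lambda>row. cnj (map (\<lambda>n. cf l (sel False n)) row)) NN))"
        unfolding Nl_def map_map comp_def
      proof (rule disj_map)
        fix row
        show "der K (cf l (concat (map (sel False) row))) (cnj (map (\<lambda>n. cf l (sel False n)) row))"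
          using cf_concat[of K l "map (sel False) row"] by (simp add: comp_def)
      qed
      then show ?thesis using IHl der_trans by blast
    qed
    have cov: "atom_pos r \<subseteq> \<Union>(set (map S NN))"
    proof
      fix p assume "p \<in> atom_pos r"
      then have "True # p \<in> atom_pos F" using And by simp
      then obtain n where n: "n \<in> set N" "True # p \<in> set n" using less.prems(2) by blast
      then obtain row where "row \<in> set NN" "n \<in> set row" using N by auto
      then show "p \<in> \<Union>(set (map S NN))" unfolding S_def using in_sel[OF n(2)] by force
    qed
    have s2: "der K r (cnj (map (\<lambda>row. wk r (-S row)) NN))"
      using split_lem[OF cov less.prems(3)] by (simp add: comp_def)
    have s3: "der K (And (dsj (map (\<lambda>row. cnj (map (\<lambda>n. cf l (sel False n)) row)) NN))
                        (cnj (map (\<lambda>row. wk r (-S row)) NN)))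
       (dsj (map (\<lambda>row. And (cnj (map (\<lambda>n. cf l (sel False n)) row)) (wk r (-S row))) NN))"
      by (rule switch_distr)
    have s4: "der K (And (cnj (map (\<lambda>n. cf l (sel False n)) row)) (wk r (-S row))) (dsj (map (cf F) row))"
      if row: "row \<in> set NN" for row
    proof -
      obtain c1 where c1: "c1 \<in> set (cl l)" and arow: "list_all2 ?P (map (?j c1) (cl r)) row"
        using list_all2_in2[OF a row] by blast
      have nsub: "\<forall>n\<in>set row. set (sel True n) \<subseteq> atom_pos r \<and> (\<forall>p\<in>set n. p \<noteq> [])"
      proof
        fix n assume hn: "n \<in> set row"
        obtain c where "c \<in> set (map (?j c1) (cl r))" "set n \<subseteq> set c"
          using list_all2_in2[OF arow hn] by blast
        then obtain c2 where "c2 \<in> set (cl r)" "set n \<subseteq> set (?j c1 c2)" by auto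
        then show "set (sel True n) \<subseteq> atom_pos r \<and> (\<forall>p\<in>set n. p \<noteq> [])"
          using sel_sub[of n c1 c2] cl_sub[of c2 r] by auto
      qed
      let ?W = "wk r (-S row)"
      have w2: "list_all2 ?P (cl ?W) (map (sel True) row)"
        unfolding cl_wk list_all2_map1 list_all2_map2
      proof (rule list_all2_mono_mem[OF arow[unfolded list_all2_map1]])
        fix c2 n assume "set n \<subseteq> set (?j c1 c2)" "n \<in> set row"
        then show "set (sel True n) \<subseteq> set (filter (\<lambda>p. p \<notin> - S row) c2)"
          using sel_sub[of n c1 c2] unfolding S_def by auto
      qed
      have wc: "\<forall>p\<in>atom_pos ?W. \<exists>n\<in>set (map (sel True) row). p \<in> set n"
        unfolding atom_pos_wk S_def by auto
      have "fsize ?W < fsize F" using And by simp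
      then have IHr: "der K ?W (dsj (map (cf ?W) (map (sel True) row)))"
        using less.hyps w2 wc less.prems(3) by blast
      have ew: "map (cf ?W) (map (sel True) row) = map (\<lambda>n. cf r (sel True n)) row"
      proof (unfold map_map, rule map_eq_conv[THEN iffD2], rule ballI)
        fix n assume n: "n \<in> set row"
        have "set (sel True n) \<subseteq> atom_pos r - - S row" using nsub n unfolding S_def by auto
        then show "(cf ?W \<circ> sel True) n = cf r (sel True n)"
          unfolding cf_def comp_def
        proof (intro arg_cong[where f=cnj] map_cong refl)
          fix x assume "set (sel True n) \<subseteq> atom_pos r - - S row" "x \<in> set (sel True n)"
          then have "x \<in> atom_pos r - - S row" by blast
          then show "At (lab (wk r (- S row)) x) = At (lab r x)" using lab_wk by metis
        qed
      qed
      let ?L = "cnj (map (\<lambda>n. cf l (sel False n)) row)"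
      have "der K (And ?L ?W) (And ?L (dsj (map (\<lambda>n. cf r (sel True n)) row)))"
        using der_AndR[OF IHr, of ?L] unfolding ew .
      also have "der K \<dots> (And (dsj (map (\<lambda>n. cf r (sel True n)) row)) ?L)" by (rule and_comm)
      also have "der K \<dots> (dsj (map (\<lambda>n. And (cf r (sel True n)) (cf l (sel False n))) row))"
        by (rule switch_distr)
      also have "der K \<dots> (dsj (map (cf F) row))"
      proof (rule disj_map)
        fix n assume n: "n \<in> set row"
        have "der K (And (cf r (sel True n)) (cf l (sel False n))) (And (cf l (sel False n)) (cf r (sel True n)))"
          by (rule and_comm)
        also have "der K \<dots> (cf F (map (Cons False) (sel False n) @ map (Cons True) (sel True n)))"
          using cf_append[of K F "map (Cons False) (sel False n)" "map (Cons True) (sel True n)"]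
            cf_cons[of F l r False "sel False n"] cf_cons[of F l r True "sel True n"] And by simp
        also have "der K \<dots> (cf F n)"
          by (rule cf_perm) (use mset_sel[of n] nsub n in auto)
        finally show "der K (And (cf r (sel True n)) (cf l (sel False n))) (cf F n)" .
      qed
      finally show ?thesis .
    qed
    have "der K F (And (dsj (map (\<lambda>row. cnj (map (\<lambda>n. cf l (sel False n)) row)) NN))
                        (cnj (map (\<lambda>row. wk r (-S row)) NN)))"
      using der_And[OF s1 s2] And by simp
    also note s3
    also have "der K (dsj (map (\<lambda>row. And (cnj (map (\<lambda>n. cf l (sel False n)) row)) (wk r (-S row))) NN))
                     (dsj (map (\<lambda>row. dsj (map (cf F) row)) NN))"
      by (rule disj_map) (rule s4)
    also have "der K \<dots> (dsj (map (cf F) N))"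
      using disj_concat[of K "map (map (cf F)) NN"] N by (simp add: comp_def map_concat)
    finally show ?thesis .
  qed
qed


fun rank :: "kind \<Rightarrow> nat" where
  "rank KAwU = 0" | "rank KAiU = 1" | "rank KAcU = 1"
| "rank KAiD = 2" | "rank KAcD = 2" | "rank KAwD = 3"

definition mono_rank :: "'a step list \<Rightarrow> bool" where
  "mono_rank s \<longleftrightarrow> (\<forall>i j k k'. i < j \<longrightarrow> j < length s \<longrightarrow> rkind (snd (s ! i)) = Some k \<longrightarrow>
       rkind (snd (s ! j)) = Some k' \<longrightarrow> rank k \<le> rank k')"

lemma kinds_nth: "i < length s \<Longrightarrow> rkind (snd (s ! i)) = Some k \<Longrightarrow> k \<in> kinds s"
  unfolding kinds_def using nth_mem by blast

lemma mono_rank_const: "(\<forall>k\<in>kinds s. rank k = r) \<Longrightarrow> mono_rank s"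
  unfolding mono_rank_def by (metis kinds_nth order.strict_trans order_refl)

lemma mono_rank_append: "mono_rank s \<Longrightarrow> mono_rank t \<Longrightarrow> (\<forall>k\<in>kinds s. \<forall>k'\<in>kinds t. rank k \<le> rank k')
  \<Longrightarrow> mono_rank (s @ t)"
  unfolding mono_rank_def
proof (intro allI impI)
  fix i j k k'
  assume ms: "\<forall>i j k k'. i < j \<longrightarrow> j < length s \<longrightarrow> rkind (snd (s ! i)) = Some k \<longrightarrow> rkind (snd (s ! j)) = Some k' \<longrightarrow> rank k \<le> rank k'"
    and mt: "\<forall>i j k k'. i < j \<longrightarrow> j < length t \<longrightarrow> rkind (snd (t ! i)) = Some k \<longrightarrow> rkind (snd (t ! j)) = Some k' \<longrightarrow> rank k \<le> rank k'"
    and st: "\<forall>k\<in>kinds s. \<forall>k'\<in>kinds t. rank k \<le> rank k'"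
    and ij: "i < j" "j < length (s @ t)"
    and ki: "rkind (snd ((s @ t) ! i)) = Some k" and kj: "rkind (snd ((s @ t) ! j)) = Some k'"
  show "rank k \<le> rank k'"
  proof (cases "j < length s")
    case True
    then show ?thesis using ms ij ki kj by (auto simp: nth_append)
  next
    case False
    note jt = this
    show ?thesis
    proof (cases "i < length s")
      case True
      then have "k \<in> kinds s" using ki kinds_nth by (auto simp: nth_append)
      moreover have "k' \<in> kinds t" using kj jt ij kinds_nth[of "j - length s" t k']
        by (auto simp: nth_append)
      ultimately show ?thesis using st by blast
    next
      case False
      then show ?thesis using mt[rule_format, of "i - length s" "j - length s" k k'] ij ki kj jt
        by (auto simp: nth_append)
    qed
  qed
qed

lemma trace_less: "trace s k p = Some j \<Longrightarrow> j < k"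
proof (induction k arbitrary: p)
  case 0 then show ?case by simp
next
  case (Suc k)
  then show ?case by (auto simp: Let_def split: if_splits dest: Suc.IH)
qed

lemma dpath_less: "dpath (flow_of s B) v w \<Longrightarrow> v < w"
proof (induction rule: dpath.induct)
  case (one e v w)
  then show ?case by (auto simp: flow_of_def trace_less split: edge.splits)
next
  case (more v u e w)
  then have "u < w" by (auto simp: flow_of_def trace_less split: edge.splits)
  then show ?case using more by simp
qed

lemma fverts_kind: "v \<in> fverts (flow_of s B) \<Longrightarrow> v < length s \<and> rkind (snd (s ! v)) = Some (flab (flow_of s B) v)"
  by (auto simp: flow_of_def is_atomic_def)

lemma edge_between_less: "edge_between (flow_of s B) e k1 k2 \<Longrightarrow>
   \<exists>v w. v < w \<and> v \<in> fverts (flow_of s B) \<and> w \<in> fverts (flow_of s B) \<and> flab (flow_of s B) v = k1 \<and> flab (flow_of s B) w = k2"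
  unfolding edge_between_def by (metis dpath.one dpath_less)

lemma mono_rank_ss:
  assumes "mono_rank s"
  shows "super_streamlined s B"
proof -
  let ?G = "flow_of s B"
  have key: "rank (flab ?G v) \<le> rank (flab ?G w)" if "v < w" "v \<in> fverts ?G" "w \<in> fverts ?G" for v w
    using assms that fverts_kind[of v s B] fverts_kind[of w s B] unfolding mono_rank_def by blast
  have sl: "streamlined s B"
    unfolding streamlined_def streamlined_flow_def
  proof (intro ballI impI notI)
    fix v w assume "v \<in> fverts ?G" "w \<in> fverts ?G" "flab ?G v \<in> {KAiD, KAwD} \<and> flab ?G w \<in> {KAiU, KAwU}"
      "dpath ?G v w"
    then show False using key[of v w] dpath_less[of s B v w] by auto
  qed
  have gen: "rank k1 \<le> rank k2" if eb: "edge_between ?G e k1 k2" for e k1 k2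
    using edge_between_less[OF eb] key by fastforce
  have wn: "weak_normal ?G"
    unfolding weak_normal_def by (auto dest: gen)
  show ?thesis using sl wn unfolding super_streamlined_def by blast
qed


lemma finite_atom_pos: "finite (atom_pos F)"
  by (induction F) auto

definition jsat :: "'a fm \<Rightarrow> 'a fm \<Rightarrow> bool" where
  "jsat F H \<longleftrightarrow> (\<exists>v. eval v F \<and> eval v H)"

lemma jsat_sym: "jsat F H = jsat H F"
  unfolding jsat_def by blast

datatype wit = WL pos pos | WR pos pos | WM pos pos

fun valid :: "'a fm \<Rightarrow> 'a fm \<Rightarrow> pos list \<Rightarrow> pos list \<Rightarrow> wit \<Rightarrow> bool" where
  "valid F H c d (WL x x') \<longleftrightarrow> x \<in> set c \<and> x' \<in> set c \<and> lab F x' = dual (lab F x)"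
| "valid F H c d (WR y y') \<longleftrightarrow> y \<in> set d \<and> y' \<in> set d \<and> lab H y' = dual (lab H y)"
| "valid F H c d (WM x y) \<longleftrightarrow> x \<in> set c \<and> y \<in> set d \<and> lab H y = dual (lab F x)"

fun swp :: "wit \<Rightarrow> wit" where
  "swp (WL x y) = WR x y" | "swp (WR x y) = WL x y" | "swp (WM x y) = WM y x"

lemma valid_swp: "valid F H c d w \<Longrightarrow> valid H F d c (swp w)"
  by (cases w) auto

fun UU :: "wit \<Rightarrow> pos list" where
  "UU (WL x y) = [x, y]" | "UU (WR x y) = []" | "UU (WM x y) = [x]"

fun PP :: "'a fm \<Rightarrow> wit \<Rightarrow> 'a fm" where
  "PP F (WL x y) = FF" | "PP F (WR x y) = TT" | "PP F (WM x y) = At (lab F x)"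

lemma UU_sub: "valid F H c d w \<Longrightarrow> set (UU w) \<subseteq> set c"
  by (cases w) auto

lemma neg_PP: "valid F H c d w \<Longrightarrow> neg (PP H (swp w)) = PP F w"
  by (cases w) auto

lemma cutU: "valid F H c d w \<Longrightarrow> KAiU \<in> K \<Longrightarrow> der K (cf F (UU w)) (PP F w)"
proof (cases w)
  case (WL x x')
  assume v: "valid F H c d w" and k: "KAiU \<in> K"
  let ?a = "lab F x"
  have "der K (And (At ?a) (And (At (dual ?a)) TT)) (And (At ?a) (At (dual ?a)))"
    by (rule der_AndR, rule and_unit1)
  also have "der K \<dots> FF" using der_rule[of "AiU ?a" K] k by simp
  finally show ?thesis using v WL by (simp add: cf_def)
next
  case (WR y y')
  then show ?thesis by (simp add: cf_def)
next
  case (WM x y)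
  then show ?thesis by (simp add: cf_def and_unit1)
qed

lemma witness:
  assumes nj: "\<not> jsat F H" and c: "c \<in> set (cl F)" and d: "d \<in> set (cl H)"
  shows "\<exists>w. valid F H c d w"
proof (rule ccontr)
  assume nw: "\<nexists>w. valid F H c d w"
  have n1: "\<forall>x\<in>set c. \<forall>x'\<in>set c. lab F x' \<noteq> dual (lab F x)"
    using nw by (metis valid.simps(1))
  have n2: "\<forall>y\<in>set d. \<forall>y'\<in>set d. lab H y' \<noteq> dual (lab H y)"
    using nw by (metis valid.simps(2))
  have n3: "\<forall>x\<in>set c. \<forall>y\<in>set d. lab H y \<noteq> dual (lab F x)"
    using nw by (metis valid.simps(3))
  define v where "v n = ((\<exists>x\<in>set c. lab F x = (n, True)) \<or> (\<exists>y\<in>set d. lab H y = (n, True)))" for n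
  have tc: "\<forall>x\<in>set c. evalA v (lab F x)"
  proof
    fix x assume x: "x \<in> set c"
    obtain n b where nb: "lab F x = (n, b)" by fastforce
    show "evalA v (lab F x)"
    proof (cases b)
      case True then show ?thesis using nb x unfolding v_def by auto
    next
      case False
      have "\<not> (\<exists>x'\<in>set c. lab F x' = (n, True))" using n1 x nb False by (auto simp: dual_def)
      moreover have "\<not> (\<exists>y\<in>set d. lab H y = (n, True))" using n3 x nb False by (auto simp: dual_def)
      ultimately show ?thesis using nb False unfolding v_def by auto
    qed
  qed
  have td: "\<forall>y\<in>set d. evalA v (lab H y)"
  proof
    fix y assume y: "y \<in> set d"
    obtain n b where nb: "lab H y = (n, b)" by fastforce
    show "evalA v (lab H y)"
    proof (cases b)
      case True then show ?thesis using nb y unfolding v_def by auto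
    next
      case False
      have "\<not> (\<exists>x\<in>set c. lab F x = (n, True))" using n3 y nb False by (force simp: dual_def)
      moreover have "\<not> (\<exists>y'\<in>set d. lab H y' = (n, True))" using n2 y nb False by (auto simp: dual_def)
      ultimately show ?thesis using nb False unfolding v_def by auto
    qed
  qed
  have "eval v F" using eval_cl c tc by blast
  moreover have "eval v H" using eval_cl d td by blast
  ultimately show False using nj unfolding jsat_def by blast
qed

lemma cover:
  assumes vW: "\<forall>c\<in>set (cl F). \<forall>d\<in>set (cl H). valid F H c d (W c d)"
    and np: "\<forall>c\<in>set (cl F). \<forall>d\<in>set (cl H). p \<notin> set (UU (W c d))"
  shows "\<not> jsat (wk F {p}) H"
proof
  assume "jsat (wk F {p}) H"
  then obtain v where ev: "eval v (wk F {p})" "eval v H" unfolding jsat_def by blast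
  from ev(1) obtain c' where c': "c' \<in> set (cl (wk F {p}))" "\<forall>q\<in>set c'. evalA v (lab (wk F {p}) q)"
    using eval_cl by blast
  then obtain c where c: "c \<in> set (cl F)" "c' = filter (\<lambda>q. q \<notin> {p}) c" by (auto simp: cl_wk)
  have tF: "evalA v (lab F q)" if "q \<in> set c" "q \<noteq> p" for q
  proof -
    have "q \<in> set c'" using that c by auto
    moreover have "q \<in> atom_pos F - {p}" using that cl_sub[OF c(1)] by auto
    ultimately show ?thesis using c'(2) lab_wk by metis
  qed
  from ev(2) obtain d where d: "d \<in> set (cl H)" "\<forall>y\<in>set d. evalA v (lab H y)"
    using eval_cl by blast
  have v: "valid F H c d (W c d)" and np': "p \<notin> set (UU (W c d))" using vW np c d by auto
  show False
  proof (cases "W c d")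
    case (WL x x')
    then show False using v np' tF[of x] tF[of x'] by auto
  next
    case (WR y y')
    then have "y \<in> set d" "y' \<in> set d" "lab H y' = dual (lab H y)" using v by auto
    then show False using d(2) by (metis evalA_dual)
  next
    case (WM x y)
    then show False using v np' tF[of x] d(2) by auto
  qed
qed


lemma la2_map: "(\<forall>x\<in>set xs. P x (f x)) \<Longrightarrow> list_all2 P xs (map f xs)"
  by (induction xs) auto

lemma routup_cut:
  assumes vW: "\<forall>c\<in>set (cl F). \<forall>d\<in>set (cl H). valid F H c d (W c d)"
    and cov: "\<forall>p\<in>atom_pos F. jsat (wk F {p}) H"
  shows "der {KAcU, KAiU} F (dsj (map (\<lambda>c. cnj (map (\<lambda>d. PP F (W c d)) (cl H))) (cl F)))"
proof -
  define NF where "NF c = concat (map (\<lambda>d. UU (W c d)) (cl H))" for c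
  have covF: "\<forall>p\<in>atom_pos F. \<exists>n\<in>set (map NF (cl F)). p \<in> set n"
  proof
    fix p assume p: "p \<in> atom_pos F"
    show "\<exists>n\<in>set (map NF (cl F)). p \<in> set n"
    proof (rule ccontr)
      assume "\<not> ?thesis"
      then have "\<forall>c\<in>set (cl F). \<forall>d\<in>set (cl H). p \<notin> set (UU (W c d))" unfolding NF_def by auto
      then have "\<not> jsat (wk F {p}) H" using cover[OF vW] by blast
      then show False using cov p by blast
    qed
  qed
  have la: "list_all2 (\<lambda>c n. set n \<subseteq> set c) (cl F) (map NF (cl F))"
    by (rule la2_map) (use vW UU_sub in \<open>fastforce simp: NF_def\<close>)
  have r1: "der {KAcU, KAiU} F (dsj (map (cf F) (map NF (cl F))))"
    using routup[OF la covF] by blast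
  have r2: "der {KAcU, KAiU} (dsj (map (cf F) (map NF (cl F))))
     (dsj (map (\<lambda>c. cnj (map (\<lambda>d. PP F (W c d)) (cl H))) (cl F)))"
    unfolding map_map
  proof (rule disj_map)
    fix c assume c: "c \<in> set (cl F)"
    have "der {KAcU, KAiU} (cf F (NF c)) (cnj (map (cf F) (map (\<lambda>d. UU (W c d)) (cl H))))"
      unfolding NF_def by (rule cf_concat)
    also have "der {KAcU, KAiU} \<dots> (cnj (map (\<lambda>d. PP F (W c d)) (cl H)))"
      unfolding map_map
      by (rule conj_map) (use vW c cutU in \<open>force\<close>)
    finally show "der {KAcU, KAiU} ((cf F \<circ> NF) c) (cnj (map (\<lambda>d. PP F (W c d)) (cl H)))" by simp
  qed
  show ?thesis using der_trans[OF r1 r2] .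
qed

lemma der_list: "der K A B \<Longrightarrow> \<exists>s. derivation A s B \<and> kinds s \<subseteq> K"
  unfolding der_def by blast

lemma rank_const: "kinds s \<subseteq> K \<Longrightarrow> (\<forall>k\<in>K. rank k = r) \<Longrightarrow> \<forall>k\<in>kinds s. rank k = r"
  by blast

theorem main_thm:
  fixes A B :: "'a fm" and \<Phi> :: "'a step list"
  assumes "derivation A \<Phi> B"
  shows "\<exists>\<Psi>. derivation A \<Psi> B \<and> super_streamlined \<Psi> B"
proof -
  let ?G0 = "neg B"
  have nj0: "\<not> jsat A ?G0" using derivation_sound[OF assms] unfolding jsat_def by auto
  define C where "C = {(S, T). S \<subseteq> atom_pos A \<and> T \<subseteq> atom_pos ?G0 \<and> \<not> jsat (wk A S) (wk ?G0 T)}"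
  define f where "f = (\<lambda>(S::pos set, T::pos set). card S + card T)"
  have C0: "({}, {}) \<in> C" using nj0 unfolding C_def by simp
  have bnd: "\<forall>y. y \<in> C \<longrightarrow> f y < card (atom_pos A) + card (atom_pos ?G0) + 1"
  proof (intro allI impI)
    fix y assume "y \<in> C"
    then obtain S T where y: "y = (S, T)" and h: "S \<subseteq> atom_pos A" "T \<subseteq> atom_pos ?G0" unfolding C_def by auto
    have "card S \<le> card (atom_pos A)" by (rule card_mono[OF finite_atom_pos h(1)])
    moreover have "card T \<le> card (atom_pos ?G0)" by (rule card_mono[OF finite_atom_pos h(2)])
    ultimately show "f y < card (atom_pos A) + card (atom_pos ?G0) + 1"
      unfolding f_def y by simp
  qed
  obtain ST where STC: "ST \<in> C" and mx: "\<forall>y. y \<in> C \<longrightarrow> f y \<le> f ST"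
    using ex_has_greatest_nat[of "\<lambda>y. y \<in> C" "({}, {})" f, OF C0 bnd] by blast
  obtain S T where ST: "ST = (S, T)" by fastforce
  have SA: "S \<subseteq> atom_pos A" and TG: "T \<subseteq> atom_pos ?G0" and njST: "\<not> jsat (wk A S) (wk ?G0 T)"
    using STC ST unfolding C_def by auto
  have finS: "finite S" using SA finite_atom_pos finite_subset by blast
  have finT: "finite T" using TG finite_atom_pos finite_subset by blast
  define F where "F = wk A S"
  define H where "H = wk ?G0 T"
  have nj: "\<not> jsat F H" using njST unfolding F_def H_def .
  have maxF: "\<forall>p\<in>atom_pos F. jsat (wk F {p}) H"
  proof (rule ballI, rule ccontr)
    fix p assume p: "p \<in> atom_pos F" and n: "\<not> jsat (wk F {p}) H"
    have pS: "p \<notin> S" "p \<in> atom_pos A" using p unfolding F_def atom_pos_wk by auto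
    have "(S \<union> {p}, T) \<in> C" using n pS SA TG unfolding C_def F_def H_def wk_wk by auto
    then have "f (S \<union> {p}, T) \<le> f ST" using mx by blast
    then show False using pS finS unfolding f_def ST by simp
  qed
  have maxH: "\<forall>p\<in>atom_pos H. jsat (wk H {p}) F"
  proof (rule ballI, rule ccontr)
    fix p assume p: "p \<in> atom_pos H" and n: "\<not> jsat (wk H {p}) F"
    have pT: "p \<notin> T" "p \<in> atom_pos ?G0" using p unfolding H_def atom_pos_wk by auto
    have "(S, T \<union> {p}) \<in> C" using n pT SA TG jsat_sym unfolding C_def F_def H_def wk_wk by auto
    then have "f (S, T \<union> {p}) \<le> f ST" using mx by blast
    then show False using pT finT unfolding f_def ST by simp
  qed
  define W where "W c d = (SOME w. valid F H c d w)" for c d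
  have vW: "\<forall>c\<in>set (cl F). \<forall>d\<in>set (cl H). valid F H c d (W c d)"
    unfolding W_def using witness[OF nj] by (metis someI_ex)
  have vW': "\<forall>d\<in>set (cl H). \<forall>c\<in>set (cl F). valid H F d c (swp (W c d))"
    using vW valid_swp by blast
  have up1: "der {KAcU, KAiU} F (dsj (map (\<lambda>c. cnj (map (\<lambda>d. PP F (W c d)) (cl H))) (cl F)))"
    by (rule routup_cut[OF vW maxF])
  have up2: "der {KAcU, KAiU} H (dsj (map (\<lambda>d. cnj (map (\<lambda>c. PP H (swp (W c d))) (cl F))) (cl H)))"
    by (rule routup_cut[OF vW' maxH])
  have dn: "der {KAcD, KAiD} (neg (dsj (map (\<lambda>d. cnj (map (\<lambda>c. PP H (swp (W c d))) (cl F))) (cl H)))) (neg H)"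
    using der_dual[OF up2] by simp
  have eqn: "neg (dsj (map (\<lambda>d. cnj (map (\<lambda>c. PP H (swp (W c d))) (cl F))) (cl H)))
     = cnj (map (\<lambda>d. dsj (map (\<lambda>c. PP F (W c d)) (cl F))) (cl H))"
    unfolding neg_dsj map_map comp_def neg_cnj
    using vW neg_PP by (intro arg_cong[where f=cnj] map_cong refl arg_cong[where f=dsj]) force
  have mid: "der {} (dsj (map (\<lambda>c. cnj (map (\<lambda>d. PP F (W c d)) (cl H))) (cl F)))
                    (cnj (map (\<lambda>d. dsj (map (\<lambda>c. PP F (W c d)) (cl F))) (cl H)))"
    by (rule mat_medial)
  have w1: "der {KAwU} A F" unfolding F_def by (rule der_wk) simp
  have w2: "der {KAwD} (neg H) B" using der_dual[OF der_wk[of "{KAwU}" ?G0 T]] unfolding H_def by simp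
  have up: "der {KAcU, KAiU} F (cnj (map (\<lambda>d. dsj (map (\<lambda>c. PP F (W c d)) (cl F))) (cl H)))"
    using der_trans[OF up1 der_mono[OF mid]] by blast
  obtain s1 where s1: "derivation A s1 F" "kinds s1 \<subseteq> {KAwU}" using der_list[OF w1] by blast
  obtain s2 where s2: "derivation F s2 (cnj (map (\<lambda>d. dsj (map (\<lambda>c. PP F (W c d)) (cl F))) (cl H)))"
    "kinds s2 \<subseteq> {KAcU, KAiU}" using der_list[OF up] by blast
  obtain s3 where s3: "derivation (cnj (map (\<lambda>d. dsj (map (\<lambda>c. PP F (W c d)) (cl F))) (cl H))) s3 (neg H)"
    "kinds s3 \<subseteq> {KAcD, KAiD}" using der_list[OF dn[unfolded eqn]] by blast
  obtain s4 where s4: "derivation (neg H) s4 B" "kinds s4 \<subseteq> {KAwD}" using der_list[OF w2] by blast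
  let ?s = "s1 @ s2 @ s3 @ s4"
  have d34: "derivation (cnj (map (\<lambda>d. dsj (map (\<lambda>c. PP F (W c d)) (cl F))) (cl H))) (s3 @ s4) B"
    by (rule derivation_append[THEN iffD2], rule exI, rule conjI, rule s3(1), rule s4(1))
  have d234: "derivation F (s2 @ s3 @ s4) B"
    by (rule derivation_append[THEN iffD2], rule exI, rule conjI, rule s2(1), rule d34)
  have d: "derivation A ?s B"
    by (rule derivation_append[THEN iffD2], rule exI, rule conjI, rule s1(1), rule d234)
  have r1: "\<forall>k\<in>kinds s1. rank k = 0" using s1(2) by auto
  have r2: "\<forall>k\<in>kinds s2. rank k = 1" using s2(2) by auto
  have r3: "\<forall>k\<in>kinds s3. rank k = 2" using s3(2) by auto
  have r4: "\<forall>k\<in>kinds s4. rank k = 3" using s4(2) by auto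
  have m34: "mono_rank (s3 @ s4)"
    using mono_rank_append[OF mono_rank_const[OF r3] mono_rank_const[OF r4]] r3 r4 by simp
  have m234: "mono_rank (s2 @ s3 @ s4)"
    using mono_rank_append[OF mono_rank_const[OF r2] m34] r2 r3 r4 by fastforce
  have m: "mono_rank ?s"
    using mono_rank_append[OF mono_rank_const[OF r1] m234] r1 r2 r3 r4 by fastforce
  show ?thesis using d mono_rank_ss[OF m] by blast
qed


theorem theorem5p25:
  fixes A B :: "'a fm" and \<Phi> :: "'a step list"
  assumes "derivation A \<Phi> B"
  shows "\<exists>\<Psi>. derivation A \<Psi> B \<and> super_streamlined \<Psi> B"
  by (rule main_thm[OF assms])

end
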